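(* Let $f=a_0+a_1 z+\cdots+a_mz^m\in \mathbb{Z}[z]$ be primitive (the greatest common divisor of its coefficients is $1$). Suppose there exists a positive real number $\alpha$ such that \[ |a_m| \alpha^m>|a_0|+|a_1|\alpha+\cdots+|a_{m-1}|\alpha^{m-1}. \] Further, suppose there exist natural numbers $n$, $d$, $k$, $\ell \leq m$, and a prime $p$ with $p\nmid d$ such that $n\geq \alpha+d$, $f(n)=\pm p^k d$, $\gcd(k,\ell)=1$, $p^k$ divides $\frac{f^{(i)}(n)}{i!}$ for each $i=0, 1, \ldots,\ell-1$, and, in case $k>1$, also $p\nmid \frac{f^{(\ell)}(n)}{\ell!}$. Then $f$ is irreducible in $\mathbb{Z}[z]$.
   Context: $f^{(i)}$ denotes the $i$-th derivative of $f$ with respect to $z$. Natural numbers are positive integers. *)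

theory Defs
  imports "HOL-Computational_Algebra.Computational_Algebra"
begin

text \<open>The i-th Taylor coefficient f^(i)(x) / i! of an integer polynomial at an integer point
  (the division is exact).\<close>
definition taylor_coeff :: "int poly \<Rightarrow> nat \<Rightarrow> int \<Rightarrow> int" where
  "taylor_coeff f i x = poly ((pderiv ^^ i) f) x div fact i"

end

theory Submission
  imports Defs
begin
lemma taylor_coeff_pcompose:
  fixes f :: "int poly"
  shows "taylor_coeff f i c = coeff (pcompose f [:c,1:]) i"
proof -
  have h: "(pderiv ^^ i) (pcompose f [:c,1:]) = pcompose ((pderiv ^^ i) f) [:c,1:]" for i
    by (induction i) (auto simp: pderiv_pcompose pderiv_pCons)
  have "poly ((pderiv ^^ i) f) c = poly ((pderiv ^^ i) (pcompose f [:c,1:])) 0"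
    by (simp add: h poly_pcompose)
  also have "\<dots> = coeff ((pderiv ^^ i) (pcompose f [:c,1:])) 0"
    by (simp add: poly_0_coeff_0)
  also have "\<dots> = fact i * coeff (pcompose f [:c,1:]) i"
    by (simp add: coeff_higher_pderiv pochhammer_fact)
  finally show ?thesis unfolding taylor_coeff_def by simp
qed

lemma weighted:
  fixes G H :: "int poly" and q :: int and l k i0 j0 :: nat
  assumes q: "prime q"
    and g0: "coeff G i0 \<noteq> 0" and h0: "coeff H j0 \<noteq> 0"
    and g1: "\<And>i. coeff G i \<noteq> 0 \<Longrightarrow> l * multiplicity q (coeff G i) + i * k \<ge> l * multiplicity q (coeff G i0) + i0 * k"
    and g2: "\<And>i. i < i0 \<Longrightarrow> coeff G i \<noteq> 0 \<Longrightarrow> l * multiplicity q (coeff G i) + i * k > l * multiplicity q (coeff G i0) + i0 * k"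
    and h1: "\<And>j. coeff H j \<noteq> 0 \<Longrightarrow> l * multiplicity q (coeff H j) + j * k \<ge> l * multiplicity q (coeff H j0) + j0 * k"
    and h2: "\<And>j. j < j0 \<Longrightarrow> coeff H j \<noteq> 0 \<Longrightarrow> l * multiplicity q (coeff H j) + j * k > l * multiplicity q (coeff H j0) + j0 * k"
  shows "coeff (G * H) (i0 + j0) \<noteq> 0 \<and> multiplicity q (coeff (G * H) (i0 + j0)) = multiplicity q (coeff G i0) + multiplicity q (coeff H j0)"
proof -
  define N where "N = i0 + j0"
  define V where "V = multiplicity q (coeff G i0) + multiplicity q (coeff H j0)"
  have pe: "prime_elem q" using q by (rule prime_imp_prime_elem)
  have nu: "\<not> is_unit q" using pe prime_elem_not_unit by blast
  have mainv: "multiplicity q (coeff G i0 * coeff H j0) = V"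
    using prime_elem_multiplicity_mult_distrib[OF pe g0 h0] V_def by simp
  have main1: "q ^ V dvd coeff G i0 * coeff H j0" using mainv multiplicity_dvd by metis
  have main2: "\<not> q ^ Suc V dvd coeff G i0 * coeff H j0"
  proof
    assume "q ^ Suc V dvd coeff G i0 * coeff H j0"
    hence "multiplicity q (coeff G i0 * coeff H j0) \<ge> Suc V"
      using multiplicity_geI[OF _ nu, of "coeff G i0 * coeff H j0" "Suc V"] g0 h0 by simp
    thus False using mainv by simp
  qed
  have other: "q ^ Suc V dvd coeff G i * coeff H (N - i)" if "i \<le> N" "i \<noteq> i0" for i
  proof (cases "coeff G i = 0 \<or> coeff H (N - i) = 0")
    case True then show ?thesis by auto
  next
    case False
    hence nz: "coeff G i \<noteq> 0" "coeff H (N - i) \<noteq> 0" by auto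
    have "l * multiplicity q (coeff G i) + i * k + (l * multiplicity q (coeff H (N - i)) + (N - i) * k)
        > l * multiplicity q (coeff G i0) + i0 * k + (l * multiplicity q (coeff H j0) + j0 * k)"
    proof (cases "i < i0")
      case True
      then show ?thesis using g2[OF True nz(1)] h1[OF nz(2)] by linarith
    next
      case False
      hence "N - i < j0" using that N_def by auto
      then show ?thesis using g1[OF nz(1)] h2[OF _ nz(2)] by fastforce
    qed
    moreover have "i * k + (N - i) * k = i0 * k + j0 * k" using that N_def
      by (metis add_mult_distrib le_add_diff_inverse)
    ultimately have "l * (multiplicity q (coeff G i) + multiplicity q (coeff H (N - i))) > l * V"
      unfolding V_def by (simp add: add_mult_distrib2)
    hence lt: "multiplicity q (coeff G i) + multiplicity q (coeff H (N - i)) \<ge> Suc V"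
      by (simp add: Suc_le_eq mult_less_cancel1)
    have "multiplicity q (coeff G i * coeff H (N - i)) \<ge> Suc V"
      using prime_elem_multiplicity_mult_distrib[OF pe nz] lt by simp
    thus ?thesis using multiplicity_dvd' by blast
  qed
  have sumeq: "coeff (G * H) N = coeff G i0 * coeff H j0 + (\<Sum>i\<in>{..N} - {i0}. coeff G i * coeff H (N - i))"
    unfolding coeff_mult
    by (subst sum.remove[of _ i0]) (auto simp: N_def)
  have rest: "q ^ Suc V dvd (\<Sum>i\<in>{..N} - {i0}. coeff G i * coeff H (N - i))"
    by (rule dvd_sum) (use other in auto)
  have ndvd: "\<not> q ^ Suc V dvd coeff (G * H) N"
    using main2 rest sumeq by (metis dvd_add_left_iff)
  have dvd: "q ^ V dvd coeff (G * H) N"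
  proof -
    have "q ^ V dvd q ^ Suc V" by (simp add: le_imp_power_dvd)
    hence "q ^ V dvd (\<Sum>i\<in>{..N} - {i0}. coeff G i * coeff H (N - i))" using rest by (rule dvd_trans)
    thus ?thesis using main1 sumeq by simp
  qed
  have "coeff (G * H) N \<noteq> 0" using ndvd by auto
  moreover have "multiplicity q (coeff (G * H) N) = V" by (rule multiplicity_eqI[OF dvd ndvd])
  ultimately show ?thesis unfolding N_def V_def by simp
qed



lemma map_of_int_mult:
  "map_poly (of_int :: int \<Rightarrow> 'a::comm_ring_1) (p * q) = map_poly of_int p * map_poly of_int q"
  by (rule poly_eqI) (simp add: coeff_map_poly coeff_mult)

lemma poly_map_of_int:
  "poly (map_poly (of_int :: int \<Rightarrow> 'a::comm_ring_1) p) (of_int x) = of_int (poly p x)"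
  by (induction p) (simp_all add: map_poly_pCons)

lemma degree_map_of_int:
  "degree (map_poly (of_int :: int \<Rightarrow> complex) p) = degree p"
  by (rule degree_map_poly) simp

lemma root_bound:
  fixes f :: "int poly" and \<alpha> :: real and z :: complex
  assumes alpha_pos: "\<alpha> > 0"
    and dom: "\<bar>real_of_int (coeff f (degree f))\<bar> * \<alpha> ^ degree f
              > (\<Sum>i<degree f. \<bar>real_of_int (coeff f i)\<bar> * \<alpha> ^ i)"
    and root: "poly (map_poly of_int f) z = 0"
  shows "norm z < \<alpha>"
proof (rule ccontr)
  assume "\<not> norm z < \<alpha>"
  hence r: "norm z \<ge> \<alpha>" by simp
  define m where "m = degree f"
  define r where "r = norm z"
  define t where "t = r / \<alpha>"
  have t1: "t \<ge> 1" using r alpha_pos by (simp add: t_def r_def)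
  have rt: "r = \<alpha> * t" using alpha_pos by (simp add: t_def)
  have "0 = poly (map_poly of_int f) z" using root by simp
  also have "\<dots> = (\<Sum>i\<le>m. of_int (coeff f i) * z ^ i)"
    by (simp add: poly_altdef degree_map_of_int coeff_map_poly m_def)
  also have "\<dots> = (\<Sum>i<m. of_int (coeff f i) * z ^ i) + of_int (coeff f m) * z ^ m"
    by (simp add: lessThan_Suc_atMost[symmetric])
  finally have eq: "of_int (coeff f m) * z ^ m = - (\<Sum>i<m. of_int (coeff f i) * z ^ i)"
    by (simp add: eq_neg_iff_add_eq_0 add.commute)
  have "\<bar>real_of_int (coeff f m)\<bar> * r ^ m = norm (of_int (coeff f m) * z ^ m)"
    by (simp add: norm_mult norm_power r_def)
  also have "\<dots> = norm (\<Sum>i<m. of_int (coeff f i) * z ^ i)" using eq by simp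
  also have "\<dots> \<le> (\<Sum>i<m. norm (of_int (coeff f i) * z ^ i))" by (rule norm_sum)
  also have "\<dots> = (\<Sum>i<m. \<bar>real_of_int (coeff f i)\<bar> * \<alpha> ^ i * t ^ i)"
    by (simp add: norm_mult norm_power r_def[symmetric] rt power_mult_distrib mult.assoc)
  also have "\<dots> \<le> (\<Sum>i<m. \<bar>real_of_int (coeff f i)\<bar> * \<alpha> ^ i * t ^ m)"
    by (rule sum_mono) (use t1 alpha_pos in \<open>auto intro!: mult_left_mono power_increasing\<close>)
  also have "\<dots> = (\<Sum>i<m. \<bar>real_of_int (coeff f i)\<bar> * \<alpha> ^ i) * t ^ m"
    by (simp add: sum_distrib_right)
  also have "\<dots> < \<bar>real_of_int (coeff f m)\<bar> * \<alpha> ^ m * t ^ m"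
    using dom t1 unfolding m_def by (intro mult_strict_right_mono) auto
  also have "\<dots> = \<bar>real_of_int (coeff f m)\<bar> * r ^ m"
    by (simp add: rt power_mult_distrib)
  finally show False by simp
qed

lemma gbound:
  fixes g :: "int poly" and \<alpha> :: real and x :: int and d :: real
  assumes deg: "degree g \<ge> 1"
    and roots: "\<And>z. poly (map_poly (of_int :: int \<Rightarrow> complex) g) z = 0 \<Longrightarrow> norm z < \<alpha>"
    and xge: "real_of_int x \<ge> \<alpha> + d" and d1: "d \<ge> 1"
  shows "\<bar>real_of_int (poly g x)\<bar> > d"
proof -
  define gc where "gc = map_poly (of_int :: int \<Rightarrow> complex) g"
  define m where "m = degree g"
  have dgc: "degree gc = m" by (simp add: gc_def m_def degree_map_of_int)
  obtain root where rt: "smult (lead_coeff gc) (\<Prod>i<degree gc. [:-root i, 1:]) = gc"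
    by (rule complex_poly_decompose')
  have pw: "poly gc w = lead_coeff gc * (\<Prod>i<m. w - root i)" for w
  proof -
    have "poly gc w = poly (smult (lead_coeff gc) (\<Prod>i<degree gc. [:-root i, 1:])) w"
      using rt by simp
    also have "\<dots> = lead_coeff gc * (\<Prod>i<m. w - root i)"
      by (simp add: poly_prod dgc)
    finally show ?thesis .
  qed
  have rb: "norm (root j) < \<alpha>" if "j < m" for j
  proof -
    have "(\<Prod>i<m. root j - root i) = 0" using that by (intro prod_zero) auto
    hence "poly gc (root j) = 0" using pw by simp
    thus ?thesis using roots gc_def by simp
  qed
  have g0: "g \<noteq> 0" using deg by auto
  have lc: "norm (lead_coeff gc) \<ge> 1"
  proof -
    have "lead_coeff gc = of_int (lead_coeff g)" by (simp add: gc_def dgc m_def coeff_map_poly degree_map_of_int)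
    moreover have "lead_coeff g \<noteq> 0" using g0 by simp
    moreover have "\<bar>lead_coeff g\<bar> \<ge> 1" using \<open>lead_coeff g \<noteq> 0\<close> by linarith
    ultimately show ?thesis by (simp only: norm_of_int)
  qed
  have fac: "norm (of_int x - root i) > d" if "i < m" for i
  proof -
    have "norm (of_int x - root i) \<ge> norm (of_int x :: complex) - norm (root i)" by (rule norm_triangle_ineq2)
    moreover have "norm (of_int x :: complex) = \<bar>real_of_int x\<bar>" by (simp only: norm_of_int)
    ultimately show ?thesis using rb[OF that] xge by linarith
  qed
  have "m \<ge> 1" using deg m_def by simp
  then obtain m' where m': "m = Suc m'" by (cases m) auto
  have "(\<Prod>i<m. norm (of_int x - root i)) = norm (of_int x - root m') * (\<Prod>i<m'. norm (of_int x - root i))"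
    by (simp add: m')
  also have "\<dots> > d * 1"
  proof (rule mult_less_le_imp_less)
    show "norm (of_int x - root m') > d" using fac m' by simp
    show "(\<Prod>i<m'. norm (of_int x - root i)) \<ge> 1"
    proof (rule prod_ge_1)
      fix i assume "i \<in> {..<m'}"
      hence "d < norm (of_int x - root i)" using fac m' by simp
      thus "1 \<le> norm (of_int x - root i)" using d1 by linarith
    qed
  qed (use d1 in auto)
  finally have P: "(\<Prod>i<m. norm (of_int x - root i)) > d" by simp
  have "\<bar>real_of_int (poly g x)\<bar> = norm (poly gc (of_int x))"
    by (simp add: gc_def poly_map_of_int norm_of_int)
  also have "\<dots> = norm (lead_coeff gc) * (\<Prod>i<m. norm (of_int x - root i))"
    by (simp add: pw norm_mult prod_norm)
  also have "\<dots> \<ge> 1 * (\<Prod>i<m. norm (of_int x - root i))"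
    by (rule mult_right_mono[OF lc]) (simp add: prod_nonneg)
  finally show ?thesis using P by simp
qed



lemma min_weight:
  fixes G :: "int poly" and q :: int and l k :: nat
  assumes "G \<noteq> 0"
  obtains i0 where "coeff G i0 \<noteq> 0"
    "\<And>i. coeff G i \<noteq> 0 \<Longrightarrow> l * multiplicity q (coeff G i) + i * k \<ge> l * multiplicity q (coeff G i0) + i0 * k"
    "\<And>i. i < i0 \<Longrightarrow> coeff G i \<noteq> 0 \<Longrightarrow> l * multiplicity q (coeff G i) + i * k > l * multiplicity q (coeff G i0) + i0 * k"
proof -
  define w where "w i = l * multiplicity q (coeff G i) + i * k" for i
  define S where "S = {w i | i. coeff G i \<noteq> 0}"
  have "coeff G (degree G) \<noteq> 0" using assms by simp
  hence "w (degree G) \<in> S" unfolding S_def by blast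
  define A where "A = (LEAST a. a \<in> S)"
  have AS: "A \<in> S" unfolding A_def by (rule LeastI) fact
  have Ale: "A \<le> w i" if "coeff G i \<noteq> 0" for i
    unfolding A_def by (rule Least_le) (use that S_def in blast)
  obtain j where j: "coeff G j \<noteq> 0 \<and> w j = A" using AS S_def by auto
  define i0 where "i0 = (LEAST i. coeff G i \<noteq> 0 \<and> w i = A)"
  have i0: "coeff G i0 \<noteq> 0 \<and> w i0 = A" unfolding i0_def by (rule LeastI) (rule j)
  have lt: "\<not> (coeff G i \<noteq> 0 \<and> w i = A)" if "i < i0" for i
    using not_less_Least[of i "\<lambda>i. coeff G i \<noteq> 0 \<and> w i = A"] that unfolding i0_def by blast
  show ?thesis
  proof (rule that[of i0])
    show "coeff G i0 \<noteq> 0" using i0 by simp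
    show "l * multiplicity q (coeff G i) + i * k \<ge> l * multiplicity q (coeff G i0) + i0 * k"
      if "coeff G i \<noteq> 0" for i using Ale[OF that] i0 unfolding w_def by simp
    show "l * multiplicity q (coeff G i) + i * k > l * multiplicity q (coeff G i0) + i0 * k"
      if "i < i0" "coeff G i \<noteq> 0" for i using Ale[OF that(2)] i0 lt[OF that(1)] that(2) unfolding w_def by fastforce
  qed
qed


theorem theorem1:
  fixes f :: "int poly" and \<alpha> :: real and n d k l p :: nat
  assumes prim: "content f = 1"
    and alpha_pos: "\<alpha> > 0"
    and dom: "\<bar>real_of_int (coeff f (degree f))\<bar> * \<alpha> ^ degree f
              > (\<Sum>i<degree f. \<bar>real_of_int (coeff f i)\<bar> * \<alpha> ^ i)"
    and pos: "n > 0" "d > 0" "k > 0" "l > 0"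
    and l_le: "l \<le> degree f"
    and p_prime: "prime p"
    and p_nd: "\<not> p dvd d"
    and n_ge: "real n \<ge> \<alpha> + real d"
    and fn: "poly f (int n) = int p ^ k * int d \<or> poly f (int n) = - (int p ^ k * int d)"
    and cop: "gcd k l = 1"
    and divs: "\<And>i. i < l \<Longrightarrow> int p ^ k dvd taylor_coeff f i (int n)"
    and ndiv: "k > 1 \<Longrightarrow> \<not> int p dvd taylor_coeff f l (int n)"
  shows "irreducible f"
proof -
  have pp: "prime (int p)" using p_prime by simp
  have pe: "prime_elem (int p)" using pp by (rule prime_imp_prime_elem)
  have pnu: "\<not> is_unit (int p)" using pe prime_elem_not_unit by blast
  have p0: "int p \<noteq> 0" using pp by auto
  have f0: "f \<noteq> 0" using l_le pos by auto
  have froots: "norm z < \<alpha>" if "poly (map_poly of_int f) z = 0" for z :: complex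
    using root_bound[OF alpha_pos dom that] .
  have d1: "real d \<ge> 1" using pos by simp
  have xge: "real_of_int (int n) \<ge> \<alpha> + real d" using n_ge by simp
  have degpos: "degree g \<ge> 1" if "f = g * h" "\<not> is_unit g" for g h
  proof (rule ccontr)
    assume "\<not> 1 \<le> degree g"
    hence "degree g = 0" by simp
    hence gc: "g = [:coeff g 0:]" by (metis degree_0_id)
    have "content g dvd content f" using that(1) by (simp add: content_mult)
    hence "normalize (coeff g 0) dvd 1" using prim gc by (metis content_const)
    hence "coeff g 0 dvd 1" by simp
    hence "is_unit g" using gc by (metis is_unit_const_poly_iff)
    thus False using that(2) by simp
  qed
  show ?thesis
  proof (rule irreducibleI)
    show "f \<noteq> 0" by (rule f0)
    show "\<not> is_unit f"
    proof
      assume "is_unit f"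
      then obtain c where "f = [:c:]" using is_unit_poly_iff by blast
      thus False using l_le pos by simp
    qed
    fix g h assume fgh: "f = g * h"
    show "is_unit g \<or> is_unit h"
    proof (rule ccontr)
      assume nu: "\<not> (is_unit g \<or> is_unit h)"
      have dg: "degree g \<ge> 1" using degpos[OF fgh] nu by blast
      have dh: "degree h \<ge> 1" using degpos[of h g] fgh nu by (simp add: mult.commute)
      have groots: "norm z < \<alpha>" if "poly (map_poly of_int g) z = 0" for z :: complex
        using froots[of z] that by (simp add: fgh map_of_int_mult)
      have hroots: "norm z < \<alpha>" if "poly (map_poly of_int h) z = 0" for z :: complex
        using froots[of z] that by (simp add: fgh map_of_int_mult)
      define gn where "gn = poly g (int n)"
      define hn where "hn = poly h (int n)"
      have gb: "\<bar>real_of_int gn\<bar> > real d" unfolding gn_def by (rule gbound[OF dg groots xge d1])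
      have hb: "\<bar>real_of_int hn\<bar> > real d" unfolding hn_def by (rule gbound[OF dh hroots xge d1])
      have prod: "gn * hn = poly f (int n)" by (simp add: gn_def hn_def fgh)
      have dv: "x dvd int p ^ k * int d" if "x dvd poly f (int n)" for x
        using fn that by auto
      have pdiv: "int p dvd x" if "x * y = poly f (int n)" "\<bar>real_of_int x\<bar> > real d" for x y
      proof (rule ccontr)
        assume "\<not> int p dvd x"
        hence "coprime (int p) x" using pp prime_imp_coprime by blast
        hence cp: "coprime x (int p ^ k)" by (simp add: coprime_commute)
        have "x dvd int p ^ k * int d" using dv that(1) by (metis dvd_triv_left)
        hence "x dvd int d" using cp coprime_dvd_mult_right_iff by blast
        hence "\<bar>x\<bar> \<le> \<bar>int d\<bar>" using pos dvd_imp_le_int[of "int d" x] by simp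
        thus False using that(2) by linarith
      qed
      have pg: "int p dvd gn" using pdiv[OF prod gb] .
      have ph: "int p dvd hn" using pdiv[of hn gn] prod hb by (simp add: mult.commute)
      have k1: "k > 1"
      proof (rule ccontr)
        assume "\<not> k > 1"
        hence "k = 1" using pos by simp
        have "int p * int p dvd gn * hn" using pg ph by (rule mult_dvd_mono)
        hence "int p * int p dvd int p * int d" using fn prod \<open>k = 1\<close> by auto
        hence "int p dvd int d" using p0 by simp
        thus False using p_nd by simp
      qed
      define F where "F = pcompose f [:int n, 1:]"
      define G where "G = pcompose g [:int n, 1:]"
      define H where "H = pcompose h [:int n, 1:]"
      have FGH: "F = G * H" by (simp add: F_def G_def H_def fgh pcompose_mult)
      have cF: "coeff F i = taylor_coeff f i (int n)" for i by (simp add: F_def taylor_coeff_pcompose)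
      have G0: "coeff G 0 = gn" by (simp add: G_def gn_def poly_0_coeff_0[symmetric] poly_pcompose)
      have H0: "coeff H 0 = hn" by (simp add: H_def hn_def poly_0_coeff_0[symmetric] poly_pcompose)
      have gn0: "gn \<noteq> 0" using gb by auto
      have hn0: "hn \<noteq> 0" using hb by auto
      have Gnz: "G \<noteq> 0" using G0 gn0 by auto
      have Hnz: "H \<noteq> 0" using H0 hn0 by auto
      have ndl: "\<not> int p dvd coeff F l" using ndiv[OF k1] cF by simp
      obtain s where s: "s \<le> l" "\<not> int p dvd coeff G s * coeff H (l - s)"
      proof -
        have "\<exists>s\<le>l. \<not> int p dvd coeff G s * coeff H (l - s)"
        proof (rule ccontr)
          assume "\<not> ?thesis"
          hence "int p dvd (\<Sum>i\<le>l. coeff G i * coeff H (l - i))" by (auto intro!: dvd_sum)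
          thus False using ndl FGH by (simp add: coeff_mult)
        qed
        thus ?thesis using that by blast
      qed
      have sG: "\<not> int p dvd coeff G s" using s(2) by auto
      have sH: "\<not> int p dvd coeff H (l - s)" using s(2) by auto
      have s0: "s \<noteq> 0" using sG G0 pg by (cases s) auto
      have sl: "s < l" using sH H0 ph s(1) by (cases "s = l") auto
      obtain i0 where i0: "coeff G i0 \<noteq> 0"
        "\<And>i. coeff G i \<noteq> 0 \<Longrightarrow> l * multiplicity (int p) (coeff G i) + i * k \<ge> l * multiplicity (int p) (coeff G i0) + i0 * k"
        "\<And>i. i < i0 \<Longrightarrow> coeff G i \<noteq> 0 \<Longrightarrow> l * multiplicity (int p) (coeff G i) + i * k > l * multiplicity (int p) (coeff G i0) + i0 * k"
        using min_weight[OF Gnz, of l "int p" k] by blast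
      obtain j0 where j0: "coeff H j0 \<noteq> 0"
        "\<And>i. coeff H i \<noteq> 0 \<Longrightarrow> l * multiplicity (int p) (coeff H i) + i * k \<ge> l * multiplicity (int p) (coeff H j0) + j0 * k"
        "\<And>i. i < j0 \<Longrightarrow> coeff H i \<noteq> 0 \<Longrightarrow> l * multiplicity (int p) (coeff H i) + i * k > l * multiplicity (int p) (coeff H j0) + j0 * k"
        using min_weight[OF Hnz, of l "int p" k] by blast
      have W: "coeff F (i0 + j0) \<noteq> 0 \<and> multiplicity (int p) (coeff F (i0 + j0)) = multiplicity (int p) (coeff G i0) + multiplicity (int p) (coeff H j0)"
        unfolding FGH by (rule weighted[OF pp i0(1) j0(1) i0(2) i0(3) j0(2) j0(3)])
      define N where "N = i0 + j0"
      define A where "A = l * multiplicity (int p) (coeff G i0) + i0 * k"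
      define B where "B = l * multiplicity (int p) (coeff H j0) + j0 * k"
      have AB: "A + B = l * multiplicity (int p) (coeff F N) + N * k"
        using W unfolding A_def B_def N_def by (simp add: add_mult_distrib add_mult_distrib2)
      have low: "l * multiplicity (int p) (coeff F N) + N * k \<ge> l * k"
      proof (cases "N < l")
        case True
        have "int p ^ k dvd coeff F N" using divs[OF True] cF by simp
        hence "multiplicity (int p) (coeff F N) \<ge> k"
          using multiplicity_geI[OF _ pnu] W N_def by blast
        hence "l * k \<le> l * multiplicity (int p) (coeff F N)" by (rule mult_le_mono2)
        thus ?thesis by linarith
      next
        case False
        thus ?thesis by (simp add: mult_le_mono1 trans_le_add2)
      qed
      define a where "a = multiplicity (int p) (coeff G 0)"
      define b where "b = multiplicity (int p) (coeff H 0)"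
      have A1: "A \<le> l * a" using i0(2)[of 0] G0 gn0 unfolding A_def a_def by simp
      have B1: "B \<le> l * b" using j0(2)[of 0] H0 hn0 unfolding B_def b_def by simp
      have A2: "A \<le> s * k" using i0(2)[of s] sG not_dvd_imp_multiplicity_0[OF sG] unfolding A_def by fastforce
      have B2: "B \<le> (l - s) * k" using j0(2)[of "l - s"] sH not_dvd_imp_multiplicity_0[OF sH] unfolding B_def by fastforce
      have "a + b = multiplicity (int p) (gn * hn)"
        using prime_elem_multiplicity_mult_distrib[OF pe gn0 hn0] G0 H0 a_def b_def by simp
      also have "\<dots> = multiplicity (int p) (int p ^ k * int d)"
        using prod fn by auto
      also have "\<dots> = k"
      proof -
        have "\<not> int p dvd int d" using p_nd by simp
        hence "multiplicity (int p) (int d) = 0" by (rule not_dvd_imp_multiplicity_0)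
        moreover have "int p ^ k \<noteq> 0" "int d \<noteq> 0" using p0 pos by auto
        ultimately show ?thesis
          using prime_elem_multiplicity_mult_distrib[OF pe \<open>int p ^ k \<noteq> 0\<close> \<open>int d \<noteq> 0\<close>] pe by simp
      qed
      finally have abk: "a + b = k" .
      have e1: "l * a + l * b = l * k" using abk by (metis add_mult_distrib2)
      have e2: "s * k + (l - s) * k = l * k" using sl by (metis add_mult_distrib le_add_diff_inverse less_imp_le)
      have "l * a = s * k" using A1 B1 A2 B2 AB low e1 e2 by linarith
      hence "l dvd s * k" by (metis dvd_triv_left)
      moreover have "coprime l k" using cop by (simp add: coprime_iff_gcd_eq_1 gcd.commute)
      ultimately have "l dvd s" by (simp add: coprime_dvd_mult_left_iff)
      thus False using s0 sl by (simp add: nat_dvd_not_less)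
    qed
  qed
qed

end
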